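(* Let $g,k,r\geq 0$ be integers. Every $r$-shallow topological minor of a $(g,k)$-gap-cover-planar graph is $(g,(2r+1)k)$-gap-cover-planar.
   Context: All graphs are simple, finite and undirected. A surface obtained from the sphere by adding $c$ cross-caps and $h$ handles has Euler genus $c+2h$. A drawing of a graph $G$ in a surface represents each vertex by a distinct point and each edge $vw$ by a non-self-intersecting curve between the points of $v$ and $w$, such that no three edges cross at a single point. Two distinct edges are independent if they share no endpoint. For a drawing $D$ of $G$, let $D^\times$ be the set of unordered pairs $\{e,f\}$ of independent edges that cross in $D$. A bearing of $D$ is a set $B$ of ordered pairs $(e,f)$ with $\{e,f\}\in D^\times$ such that for each $\{e,f\}\in D^\times$ at least one of $(e,f),(f,e)$ lies in $B$. For a bearing $B$, a $B$-cover of an edge $e$ is a set $C\subseteq V(G)$ such that every edge $f$ with $(e,f)\in B$ has an endpoint in $C$. A drawing $D$ is $k$-gap-cover-planar if there is a bearing $B$ of $D$ such that each edge $vw\in E(G)$ has a $B$-cover contained in $V(G)\setminus\{v,w\}$ of size at most $k$. A graph is $(g,k)$-gap-cover-planar if it has a $k$-gap-cover-planar drawing in a surface of Euler genus at most $g$. A $(\leq c)$-subdivision of $H$ replaces each edge of $H$ by a path with at most $c$ new internal vertices; $H$ is an $r$-shallow topological minor of $G$ if some $(\leq 2r)$-subdivision of $H$ is a subgraph of $G$. *)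

theory Defs
  imports "HOL-Analysis.Analysis"
begin

definition simple_graph :: "'a set \<Rightarrow> 'a set set \<Rightarrow> bool" where
  "simple_graph V E \<longleftrightarrow> finite V \<and> (\<forall>e\<in>E. \<exists>v w. v \<noteq> w \<and> e = {v, w} \<and> v \<in> V \<and> w \<in> V)"

definition independent_edges :: "'a set \<Rightarrow> 'a set \<Rightarrow> bool" where
  "independent_edges e f \<longleftrightarrow> e \<inter> f = {}"

text \<open>Standard polygon model of the sphere with c cross-caps and h handles.
  A word is a list of letters (label, orientation).  Sphere: a a^-1;
  otherwise a1 b1 a1^-1 b1^-1 ... ah bh ah^-1 bh^-1 c1 c1 ... cc cc.\<close>
definition surface_word :: "nat \<Rightarrow> nat \<Rightarrow> (nat \<times> bool) list" where
  "surface_word c h =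
    (if c = 0 \<and> h = 0 then [(0, True), (0, False)]
     else concat (map (\<lambda>i. [(4*i, True), (4*i+1, True), (4*i, False), (4*i+1, False)]) [0..<h])
          @ concat (map (\<lambda>j. [(4*h + j, True), (4*h + j, True)]) [0..<c]))"

text \<open>The boundary of the closed unit disk is split into n = length w arcs; the point
  of arc j at letter-parameter s (running along the letter's orientation).\<close>
definition arc_point :: "(nat \<times> bool) list \<Rightarrow> nat \<Rightarrow> real \<Rightarrow> complex" where
  "arc_point w j s =
    cis (2 * pi * (real j + (if snd (w ! j) then s else 1 - s)) / real (length w))"

definition polygon_gluing :: "(nat \<times> bool) list \<Rightarrow> (complex \<times> complex) set" where
  "polygon_gluing w =
    {(arc_point w j s, arc_point w j' s) | j j' s.
        j < length w \<and> j' < length w \<and> fst (w ! j) = fst (w ! j') \<and> 0 \<le> s \<and> s \<le> 1}"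

definition polygon_equiv :: "(nat \<times> bool) list \<Rightarrow> (complex \<times> complex) set" where
  "polygon_equiv w = (polygon_gluing w \<union> (polygon_gluing w)\<inverse>)\<^sup>*"

definition quotient_top :: "'p topology \<Rightarrow> ('p \<times> 'p) set \<Rightarrow> 'p set topology" where
  "quotient_top X R =
     topology (\<lambda>U. U \<subseteq> topspace X // R \<and> openin X (\<Union>U))"

definition surface :: "nat \<Rightarrow> nat \<Rightarrow> complex set topology" where
  "surface c h = quotient_top (top_of_set (cball 0 1)) (polygon_equiv (surface_word c h))"

definition drawing :: "'p topology \<Rightarrow> 'a set \<Rightarrow> 'a set set \<Rightarrow> ('a \<Rightarrow> 'p) \<Rightarrow> ('a set \<Rightarrow> real \<Rightarrow> 'p) \<Rightarrow> bool" where
  "drawing S V E pv ce \<longleftrightarrow>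
     pv ` V \<subseteq> topspace S \<and> inj_on pv V \<and>
     (\<forall>e\<in>E. continuous_map (top_of_set {0..1}) S (ce e) \<and> inj_on (ce e) {0..1} \<and>
        (\<exists>v w. e = {v, w} \<and> ce e 0 = pv v \<and> ce e 1 = pv w)) \<and>
     (\<forall>e\<in>E. \<forall>t\<in>{0<..<1}. ce e t \<notin> pv ` V) \<and>
     (\<forall>p. \<not> (\<exists>e1\<in>E. \<exists>e2\<in>E. \<exists>e3\<in>E. e1 \<noteq> e2 \<and> e1 \<noteq> e3 \<and> e2 \<noteq> e3 \<and>
            p \<in> ce e1 ` {0<..<1} \<and> p \<in> ce e2 ` {0<..<1} \<and> p \<in> ce e3 ` {0<..<1}))"

definition crossing_pairs :: "'a set set \<Rightarrow> ('a set \<Rightarrow> real \<Rightarrow> 'p) \<Rightarrow> 'a set set set" where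
  "crossing_pairs E ce =
     {{e, f} | e f. e \<in> E \<and> f \<in> E \<and> independent_edges e f \<and>
                    ce e ` {0..1} \<inter> ce f ` {0..1} \<noteq> {}}"

definition bearing :: "'a set set \<Rightarrow> ('a set \<Rightarrow> real \<Rightarrow> 'p) \<Rightarrow> ('a set \<times> 'a set) set \<Rightarrow> bool" where
  "bearing E ce B \<longleftrightarrow>
     (\<forall>(e, f)\<in>B. {e, f} \<in> crossing_pairs E ce) \<and>
     (\<forall>e f. {e, f} \<in> crossing_pairs E ce \<longrightarrow> (e, f) \<in> B \<or> (f, e) \<in> B)"

definition B_cover :: "('a set \<times> 'a set) set \<Rightarrow> 'a set \<Rightarrow> 'a set \<Rightarrow> bool" where
  "B_cover B e C \<longleftrightarrow> (\<forall>f. (e, f) \<in> B \<longrightarrow> f \<inter> C \<noteq> {})"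

definition gap_cover_drawing :: "nat \<Rightarrow> 'a set \<Rightarrow> 'a set set \<Rightarrow> ('a set \<Rightarrow> real \<Rightarrow> 'p) \<Rightarrow> bool" where
  "gap_cover_drawing k V E ce \<longleftrightarrow>
     (\<exists>B. bearing E ce B \<and>
        (\<forall>e\<in>E. \<exists>C. C \<subseteq> V - e \<and> card C \<le> k \<and> B_cover B e C))"

definition gap_cover_planar :: "nat \<Rightarrow> nat \<Rightarrow> 'a set \<Rightarrow> 'a set set \<Rightarrow> bool" where
  "gap_cover_planar g k V E \<longleftrightarrow>
     (\<exists>c h pv ce. c + 2 * h \<le> g \<and> drawing (surface c h) V E pv ce \<and> gap_cover_drawing k V E ce)"

text \<open>H is an r-shallow topological minor of G: some (<= 2r)-subdivision of H is a subgraph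
  of G, i.e. branch vertices phi and, for every edge {x,y} of H, a path P from phi x to phi y
  in G with at most 2r internal vertices, internally disjoint and avoiding branch vertices.\<close>
definition is_path :: "'a set set \<Rightarrow> 'a list \<Rightarrow> bool" where
  "is_path E P \<longleftrightarrow> P \<noteq> [] \<and> distinct P \<and> (\<forall>i. Suc i < length P \<longrightarrow> {P ! i, P ! Suc i} \<in> E)"

definition internal :: "'a list \<Rightarrow> 'a set" where
  "internal P = set (butlast (tl P))"

definition shallow_top_minor :: "nat \<Rightarrow> 'b set \<Rightarrow> 'b set set \<Rightarrow> 'a set \<Rightarrow> 'a set set \<Rightarrow> bool" where
  "shallow_top_minor r VH EH VG EG \<longleftrightarrow>
     (\<exists>(\<phi> :: 'b \<Rightarrow> 'a) (P :: 'b set \<Rightarrow> 'a list).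
        inj_on \<phi> VH \<and> \<phi> ` VH \<subseteq> VG \<and>
        (\<forall>e\<in>EH. is_path EG (P e) \<and> length (P e) \<le> 2 * r + 2 \<and>
            (\<exists>x y. e = {x, y} \<and> hd (P e) = \<phi> x \<and> last (P e) = \<phi> y) \<and>
            internal (P e) \<inter> \<phi> ` VH = {}) \<and>
        (\<forall>e\<in>EH. \<forall>f\<in>EH. e \<noteq> f \<longrightarrow> internal (P e) \<inter> internal (P f) = {}))"

end

theory Submission
  imports Defs
begin
lemma qt_istop:
  assumes symR: "sym R" and transR: "trans R"
  shows "istopology (\<lambda>U. U \<subseteq> topspace X // R \<and> openin X (\<Union>U))"
  unfolding istopology_def
proof (rule conjI; intro allI impI)
  fix S T assume S: "S \<subseteq> topspace X // R \<and> openin X (\<Union>S)" and T: "T \<subseteq> topspace X // R \<and> openin X (\<Union>T)"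
  have "\<Union>(S \<inter> T) = \<Union>S \<inter> \<Union>T"
  proof
    show "\<Union>S \<inter> \<Union>T \<subseteq> \<Union>(S \<inter> T)"
    proof
      fix x assume "x \<in> \<Union>S \<inter> \<Union>T"
      then obtain A B where AB: "A \<in> S" "B \<in> T" "x \<in> A" "x \<in> B" by auto
      then obtain a b where "A = R``{a}" "B = R``{b}" using S T unfolding quotient_def by blast
      then have "A = B" using AB symR transR unfolding sym_def trans_def by blast
      then show "x \<in> \<Union>(S \<inter> T)" using AB by auto
    qed
  qed auto
  then show "S \<inter> T \<subseteq> topspace X // R \<and> openin X (\<Union>(S \<inter> T))" using S T by auto
next
  fix K assume K: "\<forall>S\<in>K. S \<subseteq> topspace X // R \<and> openin X (\<Union>S)"
  have "\<Union>(\<Union>K) = \<Union>((\<lambda>S. \<Union>S) ` K)" by auto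
  then show "\<Union>K \<subseteq> topspace X // R \<and> openin X (\<Union>(\<Union>K))" using K by auto
qed

lemma qt_openin:
  assumes "sym R" "trans R"
  shows "openin (quotient_top X R) U \<longleftrightarrow> U \<subseteq> topspace X // R \<and> openin X (\<Union>U)"
  unfolding quotient_top_def using qt_istop[OF assms] by simp

lemma quotient_hausdorff:
  fixes R :: "(complex \<times> complex) set" and K :: "complex set"
  assumes reflR: "\<And>x. (x,x) \<in> R" and symR: "sym R" and transR: "trans R"
    and closeR: "\<And>x y. (x,y) \<in> R \<Longrightarrow> x \<in> K \<Longrightarrow> y \<in> K"
    and cK: "compact K"
    and cR: "compact (R \<inter> (K \<times> K))"
  shows "Hausdorff_space (quotient_top (top_of_set K) R)"
proof -
  let ?Q = "quotient_top (top_of_set K) R"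
  have op: "openin ?Q U \<longleftrightarrow> U \<subseteq> K // R \<and> openin (top_of_set K) (\<Union>U)" for U
    using qt_openin[OF symR transR] by simp
  have R1: "(y,x) \<in> R" if "(x,y) \<in> R" for x y using symR that by (auto simp: sym_def)
  have R2: "(x,z) \<in> R" if "(x,y) \<in> R" "(y,z) \<in> R" for x y z using transR that by (auto dest: transD)
  have UK: "\<Union>(K // R) = K"
    using reflR closeR by (auto simp: quotient_def)
  have top: "topspace ?Q = K // R"
  proof
    show "topspace ?Q \<subseteq> K // R" unfolding topspace_def using op by auto
    have "openin ?Q (K // R)" using op UK by simp
    then show "K // R \<subseteq> topspace ?Q" by (simp add: openin_subset)
  qed
  have satc: "closed (R `` S)" if "closed S" "S \<subseteq> K" for S
  proof -
    have "R `` S = snd ` ((R \<inter> (K \<times> K)) \<inter> (S \<times> UNIV))"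
      using that closeR by force
    moreover have "compact ((R \<inter> (K \<times> K)) \<inter> (S \<times> UNIV))"
      by (intro compact_Int_closed cR closed_Times that) auto
    ultimately have "compact (R `` S)"
      using compact_continuous_image[OF continuous_on_snd[OF continuous_on_id]] by metis
    then show ?thesis by (rule compact_imp_closed)
  qed
  have sep: "\<exists>U'. openin ?Q U' \<and> R``{a} \<in> U' \<and> \<Union>U' \<subseteq> U0"
    if a: "a \<in> K" and U0: "open U0" "R``{a} \<subseteq> U0" for a U0
  proof -
    define U where "U = K - R``(K - U0)"
    have cl: "closed (R``(K - U0))"
      by (rule satc) (use cK U0 compact_imp_closed in auto)
    have oU: "openin (top_of_set K) U"
      unfolding U_def using cl by (simp add: Diff_eq openin_open_Int open_Compl)
    have UU0: "U \<subseteq> U0" unfolding U_def using reflR by auto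
    have sat: "R``{x} \<subseteq> U" if "x \<in> U" for x
    proof
      fix y assume "y \<in> R``{x}"
      then have xy: "(x,y) \<in> R" by auto
      have "y \<in> K" using closeR xy that U_def by auto
      moreover have "y \<notin> R``(K - U0)"
      proof
        assume "y \<in> R``(K - U0)"
        then obtain z where "z \<in> K - U0" "(z,y) \<in> R" by auto
        then have "x \<in> R``(K - U0)" using R1 R2 xy by blast
        then show False using that U_def by auto
      qed
      ultimately show "y \<in> U" unfolding U_def by auto
    qed
    define U' where "U' = {C \<in> K // R. C \<subseteq> U}"
    have "\<Union>U' = U"
    proof
      show "\<Union>U' \<subseteq> U" unfolding U'_def by auto
      show "U \<subseteq> \<Union>U'"
      proof
        fix x assume x: "x \<in> U"
        then have "x \<in> K" unfolding U_def by auto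
        then have "R``{x} \<in> U'" using sat[OF x] unfolding U'_def quotient_def by auto
        then show "x \<in> \<Union>U'" using reflR[of x] by blast
      qed
    qed
    then have "openin ?Q U'" using op oU U'_def by auto
    moreover have "R``{a} \<subseteq> U"
    proof
      fix y assume y: "y \<in> R``{a}"
      then have "y \<in> K" using closeR a by auto
      moreover have "y \<notin> R``(K - U0)"
      proof
        assume "y \<in> R``(K - U0)"
        then obtain z where "z \<in> K - U0" "(z,y) \<in> R" by auto
        then have "z \<in> R``{a}" using R1 R2 y by blast
        then show False using U0 \<open>z \<in> K - U0\<close> by auto
      qed
      ultimately show "y \<in> U" unfolding U_def by auto
    qed
    then have "R``{a} \<in> U'" unfolding U'_def quotient_def using a by auto
    ultimately show ?thesis using \<open>\<Union>U' = U\<close> UU0 by auto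
  qed
  show ?thesis
    unfolding Hausdorff_space_def top
  proof (intro allI impI)
    fix A B assume AB: "A \<in> K // R \<and> B \<in> K // R \<and> A \<noteq> B"
    then obtain a b where ab: "a \<in> K" "b \<in> K" "A = R``{a}" "B = R``{b}" by (auto simp: quotient_def)
    have disj: "A \<inter> B = {}"
    proof (rule ccontr)
      assume "A \<inter> B \<noteq> {}"
      then obtain x where "(a,x) \<in> R" "(b,x) \<in> R" using ab by auto
      then have "A = B" using ab R1 R2 by blast
      then show False using AB by simp
    qed
    have clA: "closed A" "closed B" using satc[of "{a}"] satc[of "{b}"] ab by auto
    obtain U0 V0 where UV: "open U0" "open V0" "A \<subseteq> U0" "B \<subseteq> V0" "U0 \<inter> V0 = {}"
      using separation_normal[OF clA disj] by blast
    obtain U' where U': "openin ?Q U'" "A \<in> U'" "\<Union>U' \<subseteq> U0" using sep[of a U0] ab UV by auto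
    obtain V' where V': "openin ?Q V'" "B \<in> V'" "\<Union>V' \<subseteq> V0" using sep[of b V0] ab UV by auto
    have "disjnt U' V'"
    proof -
      have "C = {}" if "C \<in> U'" "C \<in> V'" for C using that U' V' UV by blast
      moreover have "C \<noteq> {}" if CU: "C \<in> U'" for C
      proof -
        have "U' \<subseteq> K // R" using U'(1) op by blast
        then obtain x where "C = R``{x}" using CU unfolding quotient_def by blast
        then show ?thesis using reflR[of x] by blast
      qed
      ultimately show ?thesis by (auto simp: disjnt_def)
    qed
    then show "\<exists>U V. openin ?Q U \<and> openin ?Q V \<and> A \<in> U \<and> B \<in> V \<and> disjnt U V"
      using U' V' by blast
  qed
qed

definition Pt :: "nat \<Rightarrow> real \<Rightarrow> complex" where
  "Pt n u = cis (2 * pi * u / real n)"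

definition Tset :: "nat \<Rightarrow> real \<Rightarrow> complex set" where
  "Tset n s = (\<lambda>j. Pt n (real j + s)) ` {..<n} \<union> (\<lambda>j. Pt n (real j + (1 - s))) ` {..<n}"

lemma arc_point_Pt: "arc_point w j s = Pt (length w) (real j + (if snd (w ! j) then s else 1 - s))"
  unfolding arc_point_def Pt_def by simp

lemma Pt_key:
  assumes n: "n > 0" and eq: "Pt n (real a + x) = Pt n (real b + y)"
    and x: "0 \<le> x" "x \<le> 1" and y: "0 \<le> y" "y \<le> 1"
  shows "x = y \<or> (x \<in> {0,1} \<and> y \<in> {0,1})"
proof -
  have "sin (2 * pi * (real a + x) / real n) = sin (2 * pi * (real b + y) / real n) \<and>
        cos (2 * pi * (real a + x) / real n) = cos (2 * pi * (real b + y) / real n)"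
    using eq unfolding Pt_def by (metis cis.sel)
  then obtain m :: int where m: "2 * pi * (real a + x) / real n = 2 * pi * (real b + y) / real n + 2 * pi * m"
    using sin_cos_eq_iff by blast
  then have "pi * (2 * (real a + x)) = pi * (2 * (real b + y + m * real n))"
    using n by (simp add: field_simps)
  then have "real a + x = real b + y + m * real n" by simp
  then have xy: "x - y = of_int (int b - int a + m * int n)" by simp
  define k where "k = int b - int a + m * int n"
  have "\<bar>x - y\<bar> \<le> 1" using x y by auto
  then have "\<bar>k\<bar> \<le> 1" using xy k_def by (metis of_int_abs of_int_le_1_iff)
  then have "k = 0 \<or> k = 1 \<or> k = -1" by auto
  moreover have xyk: "x - y = of_int k" using xy k_def by simp
  ultimately show ?thesis using x y by (smt (verit) insert_iff of_int_1 of_int_0 of_int_minus)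
qed

lemma Tset_sym: "Tset n (1 - s) = Tset n s"
  unfolding Tset_def by auto

lemma arc_in_T:
  assumes "j < length w"
  shows "arc_point w j s \<in> Tset (length w) s"
  using assms unfolding arc_point_Pt Tset_def by auto

lemma T_eq:
  assumes n: "n > 0" and s: "0 \<le> s" "s \<le> 1" and t: "0 \<le> t" "t \<le> 1"
    and y: "y \<in> Tset n s" "y \<in> Tset n t"
  shows "Tset n s = Tset n t"
proof -
  obtain a x where a: "y = Pt n (real a + x)" "x = s \<or> x = 1 - s"
    using y(1) unfolding Tset_def by auto
  obtain b z where b: "y = Pt n (real b + z)" "z = t \<or> z = 1 - t"
    using y(2) unfolding Tset_def by auto
  have x01: "0 \<le> x" "x \<le> 1" and z01: "0 \<le> z" "z \<le> 1" using a(2) b(2) s t by auto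
  have "x = z \<or> (x \<in> {0,1} \<and> z \<in> {0,1})"
    using Pt_key[OF n _ x01 z01] a(1) b(1) by metis
  then show ?thesis
  proof
    assume "x = z"
    then have "s = t \<or> s = 1 - t" using a(2) b(2) by auto
    then show ?thesis using Tset_sym by metis
  next
    assume "x \<in> {0,1} \<and> z \<in> {0,1}"
    then have "s \<in> {0,1}" "t \<in> {0,1}" using a(2) b(2) by auto
    then show ?thesis using Tset_sym[of n 0] by auto
  qed
qed

lemma gluing_T:
  assumes "(y, z) \<in> polygon_gluing w"
  shows "\<exists>s. 0 \<le> s \<and> s \<le> 1 \<and> y \<in> Tset (length w) s \<and> z \<in> Tset (length w) s"
  using assms unfolding polygon_gluing_def by (auto intro!: arc_in_T)

lemma gluing_len: "(y, z) \<in> polygon_gluing w \<Longrightarrow> length w > 0"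
  unfolding polygon_gluing_def by auto

lemma step_T:
  assumes "(y, z) \<in> polygon_gluing w \<union> (polygon_gluing w)\<inverse>"
    and "y \<in> Tset (length w) s0" "0 \<le> s0" "s0 \<le> 1"
  shows "z \<in> Tset (length w) s0"
proof -
  have n: "length w > 0" using assms(1) gluing_len by auto
  obtain s where "0 \<le> s" "s \<le> 1" "y \<in> Tset (length w) s" "z \<in> Tset (length w) s"
    using assms(1) gluing_T by blast
  then show ?thesis using T_eq[OF n] assms by metis
qed

lemma class_T:
  assumes "(x, y) \<in> polygon_equiv w"
  shows "y = x \<or> (\<exists>s. 0 \<le> s \<and> s \<le> 1 \<and> x \<in> Tset (length w) s \<and> y \<in> Tset (length w) s)"
  using assms unfolding polygon_equiv_def
proof (induction rule: rtrancl_induct)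
  case base
  then show ?case by simp
next
  case (step y z)
  show ?case
  proof (cases "y = x")
    case True
    then show ?thesis using step(2) gluing_T by blast
  next
    case False
    then show ?thesis using step step_T by blast
  qed
qed

lemma card_Tset: "finite (Tset n s) \<and> card (Tset n s) \<le> 2 * n"
proof -
  have "card (Tset n s) \<le> card ((\<lambda>j. Pt n (real j + s)) ` {..<n}) + card ((\<lambda>j. Pt n (real j + (1 - s))) ` {..<n})"
    unfolding Tset_def by (rule card_Un_le)
  also have "\<dots> \<le> n + n" by (intro add_mono) (metis card_image_le card_lessThan finite_lessThan)+
  finally show ?thesis unfolding Tset_def by auto
qed

lemma class_finite:
  "finite (polygon_equiv w `` {x}) \<and> card (polygon_equiv w `` {x}) \<le> 2 * length w + 1"
proof (cases "polygon_equiv w `` {x} \<subseteq> {x}")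
  case True
  then have "card (polygon_equiv w `` {x}) \<le> card {x}" by (intro card_mono) auto
  then show ?thesis using True finite_subset by auto
next
  case False
  then obtain y where y: "(x,y) \<in> polygon_equiv w" "y \<noteq> x" by auto
  then obtain s0 where s0: "0 \<le> s0" "s0 \<le> 1" "x \<in> Tset (length w) s0"
    using class_T by blast
  have sub: "polygon_equiv w `` {x} \<subseteq> insert x (Tset (length w) s0)"
  proof
    fix z assume "z \<in> polygon_equiv w `` {x}"
    then have "z = x \<or> (\<exists>s. 0 \<le> s \<and> s \<le> 1 \<and> x \<in> Tset (length w) s \<and> z \<in> Tset (length w) s)"
      using class_T by blast
    moreover have n: "length w > 0" using s0 unfolding Tset_def by auto
    ultimately show "z \<in> insert x (Tset (length w) s0)"
      using T_eq[OF n] s0 by blast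
  qed
  have fin: "finite (insert x (Tset (length w) s0))" using card_Tset by auto
  have "card (polygon_equiv w `` {x}) \<le> card (insert x (Tset (length w) s0))"
    by (rule card_mono[OF fin sub])
  also have "\<dots> \<le> Suc (card (Tset (length w) s0))" by (simp add: card_insert_le_m1)
  also have "\<dots> \<le> 2 * length w + 1" using card_Tset by auto
  finally show ?thesis using finite_subset[OF sub fin] by auto
qed

lemma arc_point_cont: "continuous_on UNIV (arc_point w j)"
proof (cases "length w = 0")
  case True
  then show ?thesis unfolding arc_point_def by simp
next
  case False
  show ?thesis
  proof (cases "snd (w ! j)")
    case True
    then show ?thesis unfolding arc_point_def using False by (auto intro!: continuous_intros)
  next
    case F: False
    then show ?thesis unfolding arc_point_def using False by (auto intro!: continuous_intros)
  qed
qed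

lemma arc_point_norm: "norm (arc_point w j s) = 1"
  unfolding arc_point_def by simp

lemma gluing_compact: "compact (polygon_gluing w)"
proof -
  define I where "I = {(j, j'). j < length w \<and> j' < length w \<and> fst (w ! j) = fst (w ! j')}"
  have eq: "polygon_gluing w = (\<Union>(j, j')\<in>I. (\<lambda>s. (arc_point w j s, arc_point w j' s)) ` {0..1})"
  proof
    show "polygon_gluing w \<subseteq> (\<Union>(j, j')\<in>I. (\<lambda>s. (arc_point w j s, arc_point w j' s)) ` {0..1})"
      unfolding polygon_gluing_def I_def by fastforce
    show "(\<Union>(j, j')\<in>I. (\<lambda>s. (arc_point w j s, arc_point w j' s)) ` {0..1}) \<subseteq> polygon_gluing w"
      unfolding polygon_gluing_def I_def by fastforce
  qed
  have fin: "finite I" unfolding I_def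
    by (rule finite_subset[of _ "{..<length w} \<times> {..<length w}"]) auto
  have "compact ((\<lambda>s. (arc_point w j s, arc_point w j' s)) ` {0..1})" for j j'
    by (intro compact_continuous_image continuous_on_Pair compact_Icc
        continuous_on_subset[OF arc_point_cont]) auto
  then show ?thesis unfolding eq using fin by (auto intro!: compact_UN)
qed

lemma compact_converse: "compact (A :: ('a::topological_space \<times> 'b::topological_space) set) \<Longrightarrow> compact (A\<inverse>)"
proof -
  assume cA: "compact A"
  have eq: "A\<inverse> = (\<lambda>p. (snd p, fst p)) ` A" by force
  show ?thesis unfolding eq using cA by (intro compact_continuous_image continuous_intros)
qed

lemma compact_relcomp:
  fixes A B :: "('a::metric_space \<times> 'a) set"
  assumes "compact A" "compact B"
  shows "compact (A O B)"
proof -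
  have eq: "A O B = (\<lambda>p. (fst (fst p), snd (snd p))) ` ((A \<times> B) \<inter> {p. snd (fst p) = fst (snd p)})"
    by force
  have "closed {p :: ('a \<times> 'a) \<times> ('a \<times> 'a). snd (fst p) = fst (snd p)}"
    by (intro closed_Collect_eq continuous_intros)
  then have "compact ((A \<times> B) \<inter> {p. snd (fst p) = fst (snd p)})"
    using assms by (intro compact_Int_closed compact_Times)
  then show ?thesis unfolding eq
    by (intro compact_continuous_image continuous_intros)
qed

lemma relpow_mono_set: "(A :: ('a \<times> 'a) set) \<subseteq> B \<Longrightarrow> A ^^ m \<subseteq> B ^^ m"
proof (induction m)
  case 0
  show ?case by simp
next
  case (Suc m)
  have "A ^^ Suc m = A ^^ m O A" "B ^^ Suc m = B ^^ m O B" by simp_all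
  then show ?case using Suc relcomp_mono by metis
qed

lemma polygon_equiv_compact:
  defines "K \<equiv> cball (0::complex) 1"
  shows "compact (polygon_equiv w \<inter> (K \<times> K))"
proof -
  let ?G = "polygon_gluing w"
  let ?R = "polygon_equiv w"
  define M where "M = Id_on K \<union> ?G \<union> ?G\<inverse>"
  have GK: "?G \<subseteq> K \<times> K" unfolding polygon_gluing_def K_def
    using arc_point_norm by (auto simp: dist_norm) 
  have MK: "M \<subseteq> K \<times> K" using GK unfolding M_def by auto
  have cM: "compact M"
  proof -
    have "Id_on K = (\<lambda>z. (z, z)) ` K" by (auto simp: Id_on_def)
    moreover have "compact ((\<lambda>z. (z, z)) ` K)" unfolding K_def
      by (intro compact_continuous_image continuous_intros compact_cball)
    ultimately have "compact (Id_on K)" by simp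
    then show ?thesis unfolding M_def
      using gluing_compact compact_converse compact_Un by blast
  qed
  have cMp: "compact (M ^^ Suc m)" for m
  proof (induction m)
    case 0
    then show ?case using cM by simp
  next
    case (Suc m)
    then show ?case using compact_relcomp cM by (simp only: relpow.simps)
  qed
  have MR: "M \<subseteq> ?R" unfolding M_def polygon_equiv_def by auto
  have RM: "M ^^ m \<subseteq> ?R" for m
  proof
    fix p assume "p \<in> M ^^ m"
    then have "p \<in> M\<^sup>*" using relpow_imp_rtrancl by (metis surj_pair)
    then have "p \<in> ?R\<^sup>*" using rtrancl_mono[OF MR] by blast
    then show "p \<in> ?R" unfolding polygon_equiv_def by simp
  qed
  have MpK: "M ^^ Suc m \<subseteq> K \<times> K" for m
  proof (induction m)
    case 0
    then show ?case using MK by simp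
  next
    case (Suc m)
    then show ?case using MK by (auto simp only: relpow.simps)
  qed
  define N where "N = Suc ((2 * length w + 1) * (2 * length w + 1))"
  have pad: "(x, y) \<in> M ^^ (d + m)" if "(x, y) \<in> M ^^ m" "x \<in> K" for x y d m
    using that
  proof (induction d)
    case 0
    then show ?case by simp
  next
    case (Suc d)
    have a: "(x, y) \<in> M ^^ (d + m)" using Suc by blast
    have b: "(x, x) \<in> M" using Suc.prems(2) unfolding M_def by blast
    have "(x, y) \<in> M ^^ Suc (d + m)" by (rule relpow_Suc_I2[OF b a])
    then show ?case by simp
  qed
  have closeR: "y \<in> K" if "(x, y) \<in> ?R" "x \<in> K" for x y
    using that(1) unfolding polygon_equiv_def
  proof (induction rule: rtrancl_induct)
    case base then show ?case using that(2) .
  next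
    case (step y z) then show ?case using GK by auto
  qed
  have sub: "(x, y) \<in> M ^^ N" if xy: "(x, y) \<in> ?R" "x \<in> K" for x y
  proof -
    define C where "C = ?R `` {x}"
    define Mx where "Mx = M \<inter> (C \<times> C)"
    have finC: "finite C" "card C \<le> 2 * length w + 1" using class_finite unfolding C_def by auto
    have "(x, y) \<in> Mx\<^sup>*"
      using xy(1) unfolding polygon_equiv_def
    proof (induction rule: rtrancl_induct)
      case base then show ?case by simp
    next
      case (step y z)
      have "z \<in> C" unfolding C_def polygon_equiv_def using rtrancl_into_rtrancl[OF step(1) step(2)] by simp
      moreover have "y \<in> C" unfolding C_def polygon_equiv_def using step(1) by auto
      moreover have "(y, z) \<in> M" using step(2) unfolding M_def by auto
      ultimately have "(y, z) \<in> Mx" unfolding Mx_def by auto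
      then show ?case using step(3) by (simp add: rtrancl_into_rtrancl)
    qed
    moreover have finMx: "finite Mx" unfolding Mx_def using finC by auto
    ultimately obtain m where m: "m \<le> card Mx" "(x, y) \<in> Mx ^^ m"
      using rtrancl_finite_eq_relpow[OF finMx] by blast
    have "card Mx \<le> card (C \<times> C)" unfolding Mx_def using finC by (intro card_mono) auto
    also have "\<dots> = card C * card C" by (simp add: card_cartesian_product)
    also have "\<dots> \<le> (2 * length w + 1) * (2 * length w + 1)" using finC by (intro mult_mono) auto
    finally have "m \<le> N" using m N_def by auto
    moreover have "(x, y) \<in> M ^^ m" using m(2) relpow_mono_set[of Mx M m] Mx_def by auto
    ultimately show ?thesis using pad[of x y m "N - m"] xy by auto
  qed
  have "polygon_equiv w \<inter> (K \<times> K) = M ^^ N"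
  proof
    show "polygon_equiv w \<inter> (K \<times> K) \<subseteq> M ^^ N" using sub by auto
    show "M ^^ N \<subseteq> polygon_equiv w \<inter> (K \<times> K)"
    proof -
      have "N = Suc (N - 1)" using N_def by simp
      then have "M ^^ N \<subseteq> K \<times> K" using MpK[of "N - 1"] by metis
      then show ?thesis using RM[of N] by blast
    qed
  qed
  moreover have "N = Suc (N - 1)" using N_def by simp
  ultimately show ?thesis using cMp[of "N - 1"] by metis
qed

lemma surface_hausdorff: "Hausdorff_space (surface c h)"
proof -
  let ?w = "surface_word c h"
  let ?R = "polygon_equiv ?w"
  let ?K = "cball (0::complex) 1"
  have GK: "polygon_gluing ?w \<subseteq> ?K \<times> ?K" unfolding polygon_gluing_def
    using arc_point_norm by (auto simp: dist_norm)
  have closeR: "y \<in> ?K" if "(x, y) \<in> ?R" "x \<in> ?K" for x y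
    using that(1) unfolding polygon_equiv_def
  proof (induction rule: rtrancl_induct)
    case base then show ?case using that(2) .
  next
    case (step y z) then show ?case using GK by auto
  qed
  have s: "sym ?R" unfolding polygon_equiv_def by (intro sym_rtrancl) (auto simp: sym_def)
  have t: "trans ?R" unfolding polygon_equiv_def by (rule trans_rtrancl)
  have r: "(x, x) \<in> ?R" for x unfolding polygon_equiv_def by simp
  have cK: "compact ?K" by simp
  show ?thesis unfolding surface_def
    by (rule quotient_hausdorff[OF r s t closeR cK polygon_equiv_compact])
qed

definition arc_in :: "'p topology \<Rightarrow> (real \<Rightarrow> 'p) \<Rightarrow> bool" where
  "arc_in X g \<longleftrightarrow> continuous_map (top_of_set {0..1}) X g \<and> inj_on g {0..1}"

lemma arc_restrict:
  assumes "arc_in X g" "0 \<le> u" "u < v" "v \<le> 1"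
  shows "arc_in X (\<lambda>t. g (u + t * (v - u)))"
    and "(\<lambda>t. g (u + t * (v - u))) ` {0..1} \<subseteq> g ` {0..1}"
proof -
  have m: "(\<lambda>t. u + t * (v - u)) ` {0..1} \<subseteq> {0..1}"
  proof
    fix x assume "x \<in> (\<lambda>t. u + t * (v - u)) ` {0..1}"
    then obtain t where t: "0 \<le> t" "t \<le> 1" "x = u + t * (v - u)" by auto
    have h1: "t * (v - u) \<le> v - u" using mult_right_mono[of t 1 "v - u"] t assms by simp
    have h2: "0 \<le> t * (v - u)" using t assms by simp
    show "x \<in> {0..1}" using t(3) h1 h2 assms(2,3,4) by (simp only: atLeastAtMost_iff) (intro conjI; linarith)
  qed
  have c: "continuous_map (top_of_set {0..1}) (top_of_set {0..1}) (\<lambda>t. u + t * (v - u))"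
    using m by (auto intro!: continuous_intros)
  have "continuous_map (top_of_set {0..1}) X (g \<circ> (\<lambda>t. u + t * (v - u)))"
    using continuous_map_compose[OF c] assms(1) unfolding arc_in_def by blast
  moreover have "inj_on (\<lambda>t. g (u + t * (v - u))) {0..1}"
  proof (rule inj_onI)
    fix x y assume xy: "x \<in> {0..1}" "y \<in> {0..1}" "g (u + x * (v - u)) = g (u + y * (v - u))"
    then have "u + x * (v - u) = u + y * (v - u)"
      using assms(1) m unfolding arc_in_def inj_on_def by blast
    then show "x = y" using assms by simp
  qed
  ultimately show "arc_in X (\<lambda>t. g (u + t * (v - u)))" unfolding arc_in_def o_def by simp
  show "(\<lambda>t. g (u + t * (v - u))) ` {0..1} \<subseteq> g ` {0..1}" using m by auto
qed

lemma arc_reverse: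
  assumes "arc_in X g"
  shows "arc_in X (\<lambda>t. g (1 - t))"
proof -
  have c: "continuous_map (top_of_set {0..1}) (top_of_set {0..1}) (\<lambda>t::real. 1 - t)"
    by (auto intro!: continuous_intros)
  have "continuous_map (top_of_set {0..1}) X (g \<circ> (\<lambda>t. 1 - t))"
    using continuous_map_compose[OF c] assms(1) unfolding arc_in_def by blast
  moreover have "inj_on (\<lambda>t. g (1 - t)) {0..1}"
  proof (rule inj_onI)
    fix x y :: real assume xy: "x \<in> {0..1}" "y \<in> {0..1}" "g (1 - x) = g (1 - y)"
    then have "1 - x = 1 - y" using assms(1) unfolding arc_in_def inj_on_def by auto
    then show "x = y" by simp
  qed
  ultimately show ?thesis unfolding arc_in_def o_def by simp
qed

lemma arc_join:
  assumes a: "arc_in X g1" and b: "arc_in X g2" and e: "g1 1 = g2 0"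
    and d: "\<And>t s. t \<in> {0..1} \<Longrightarrow> s \<in> {0..1} \<Longrightarrow> g1 t = g2 s \<Longrightarrow> t = 1 \<and> s = 0"
  shows "arc_in X (\<lambda>t. if t \<le> 1/2 then g1 (2 * t) else g2 (2 * t - 1))"
proof -
  let ?T01 = "top_of_set {0..1::real}"
  let ?g = "\<lambda>x. if x \<le> 1/2 then (g1 \<circ> (\<lambda>t. 2 * t)) x else (g2 \<circ> (\<lambda>t. 2 * t -1)) x"
  have g1: "continuous_map ?T01 X g1" and g2: "continuous_map ?T01 X g2"
    using a b unfolding arc_in_def by auto
  have "continuous_map ?T01 X ?g"
  proof (intro continuous_map_cases_le continuous_map_compose, force, force)
    show "continuous_map (subtopology ?T01 {x \<in> topspace ?T01. x \<le> 1/2}) ?T01 ((*) 2)"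
      by (auto simp: continuous_map_in_subtopology continuous_map_from_subtopology)
    have "continuous_map
           (subtopology (top_of_set {0..1}) {x. 0 \<le> x \<and> x \<le> 1 \<and> 1 \<le> x * 2})
           euclideanreal (\<lambda>t. 2 * t - 1)"
      by (intro continuous_intros) (force intro: continuous_map_from_subtopology)
    then show "continuous_map (subtopology ?T01 {x \<in> topspace ?T01. 1/2 \<le> x}) ?T01 (\<lambda>t. 2 * t - 1)"
      by (force simp: continuous_map_in_subtopology)
    show "(g1 \<circ> (*) 2) x = (g2 \<circ> (\<lambda>t. 2 * t - 1)) x" if "x \<in> topspace ?T01" "x = 1/2" for x
    proof -
      have "2 * x = 1" "2 * x - 1 = 0" using that by auto
      then show ?thesis using e by simp
    qed
  qed (auto simp: g1 g2)
  moreover have "inj_on ?g {0..1}"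
  proof (rule inj_onI)
    fix x y :: real assume x: "x \<in> {0..1}" and y: "y \<in> {0..1}" and eq: "?g x = ?g y"
    have i1: "inj_on g1 {0..1}" and i2: "inj_on g2 {0..1}" using a b unfolding arc_in_def by auto
    show "x = y"
    proof (cases "x \<le> 1/2")
      case True
      note xT = True
      show ?thesis
      proof (cases "y \<le> 1/2")
        case True
        then have "g1 (2 * x) = g1 (2 * y)" using eq xT by simp
        then have "2 * x = 2 * y" by (rule inj_onD[OF i1]) (use x y xT True in auto)
        then show ?thesis by simp
      next
        case False
        then have "g1 (2 * x) = g2 (2 * y - 1)" using eq xT by simp
        then have "2 * y - 1 = 0" using d[of "2 * x" "2 * y - 1"] x y xT False by auto
        then show ?thesis using False by simp
      qed
    next
      case False
      note xF = False
      show ?thesis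
      proof (cases "y \<le> 1/2")
        case True
        then have "g1 (2 * y) = g2 (2 * x - 1)" using eq xF by simp
        then have "2 * x - 1 = 0" using d[of "2 * y" "2 * x - 1"] x y xF True by auto
        then show ?thesis using xF by simp
      next
        case False
        then have "g2 (2 * x - 1) = g2 (2 * y - 1)" using eq xF by simp
        then have "2 * x - 1 = 2 * y - 1" by (rule inj_onD[OF i2]) (use x y xF False in auto)
        then show ?thesis by simp
      qed
    qed
  qed
  ultimately show ?thesis unfolding arc_in_def o_def by simp
qed

lemma arc_shortcut:
  assumes H: "Hausdorff_space X" and a: "arc_in X g1" and b: "arc_in X g2"
    and e: "g1 1 = g2 0" and ne: "g1 0 \<noteq> g2 1"
  shows "\<exists>g. arc_in X g \<and> g 0 = g1 0 \<and> g 1 = g2 1 \<and> g ` {0..1} \<subseteq> g1 ` {0..1} \<union> g2 ` {0..1}"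
proof -
  let ?T01 = "top_of_set {0..1::real}"
  have c1: "continuous_map ?T01 X g1" and c2: "continuous_map ?T01 X g2"
    and i1: "inj_on g1 {0..1}" and i2: "inj_on g2 {0..1}" using a b unfolding arc_in_def by auto
  have "compactin ?T01 {0..1}" by (simp add: compactin_subtopology)
  then have "compactin X (g2 ` {0..1})" using image_compactin c2 by blast
  then have clK: "closedin X (g2 ` {0..1})" using compactin_imp_closedin H by blast
  define S where "S = {t \<in> topspace ?T01. g1 t \<in> g2 ` {0..1}}"
  have "closedin ?T01 S" unfolding S_def using closedin_continuous_map_preimage[OF c1 clK] .
  then have clS: "closed S" using closedin_closed_trans by blast
  have S01: "S \<subseteq> {0..1}" unfolding S_def by auto
  have "1 \<in> S" unfolding S_def using e by force
  then have Sne: "S \<noteq> {}" by auto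
  have bdd: "bdd_below S" unfolding bdd_below_def using S01 by (auto intro!: exI[of _ 0])
  define t0 where "t0 = Inf S"
  have t0S: "t0 \<in> S" unfolding t0_def using closed_contains_Inf[OF Sne bdd clS] .
  have t0min: "t0 \<le> t" if "t \<in> S" for t unfolding t0_def using cInf_lower[OF that bdd] .
  have t01: "0 \<le> t0" "t0 \<le> 1" using t0S S01 by auto
  obtain s0 where s0: "s0 \<in> {0..1}" "g1 t0 = g2 s0" using t0S unfolding S_def by auto
  show ?thesis
  proof (cases "t0 = 0")
    case True
    have "s0 \<noteq> 1" using s0 ne True by auto
    then have "s0 < 1" using s0 by auto
    then show ?thesis using arc_restrict[OF b, of s0 1] s0 True
      by (intro exI[of _ "\<lambda>t. g2 (s0 + t * (1 - s0))"]) auto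
  next
    case t0pos: False
    then have t0p: "0 < t0" using t01 by auto
    show ?thesis
    proof (cases "s0 = 1")
      case True
      then show ?thesis using arc_restrict[OF a, of 0 t0] s0 t0p t01
        by (intro exI[of _ "\<lambda>t. g1 (0 + t * (t0 - 0))"]) auto
    next
      case False
      then have s0l: "s0 < 1" using s0 by auto
      define h1 where "h1 = (\<lambda>t. g1 (0 + t * (t0 - 0)))"
      define h2 where "h2 = (\<lambda>t. g2 (s0 + t * (1 - s0)))"
      have ah1: "arc_in X h1" and im1: "h1 ` {0..1} \<subseteq> g1 ` {0..1}"
        using arc_restrict[OF a, of 0 t0] t0p t01 unfolding h1_def by auto
      have ah2: "arc_in X h2" and im2: "h2 ` {0..1} \<subseteq> g2 ` {0..1}"
        using arc_restrict[OF b, of s0 1] s0l s0 unfolding h2_def by auto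
      have e2: "h1 1 = h2 0" unfolding h1_def h2_def using s0 by simp
      have d: "t = 1 \<and> s = 0" if ts: "t \<in> {0..1}" "s \<in> {0..1}" "h1 t = h2 s" for t s
      proof -
        have st: "s0 + s * (1 - s0) \<in> {0..1}"
        proof -
          have q1: "s * (1 - s0) \<le> 1 - s0" using mult_right_mono[of s 1 "1 - s0"] ts(2) s0l by simp
          have q2: "0 \<le> s * (1 - s0)" using ts(2) s0l by simp
          show ?thesis using q1 q2 s0 by (simp only: atLeastAtMost_iff) (intro conjI; linarith)
        qed
        have tt: "t * t0 \<in> {0..1}"
        proof -
          have "t * t0 \<le> 1 * 1" using ts(1) t01 by (intro mult_mono) auto
          then show ?thesis using ts(1) t01 by auto
        qed
        have "g1 (t * t0) \<in> g2 ` {0..1}" using ts(3) st unfolding h1_def h2_def by auto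
        then have "t * t0 \<in> S" unfolding S_def using tt by auto
        then have "t0 \<le> t * t0" using t0min by blast
        then have "1 * t0 \<le> t * t0" by simp
        then have "1 \<le> t" using mult_le_cancel_right[of 1 t0 t] t0p by simp
        then have t1: "t = 1" using ts(1) by simp
        then have "g2 s0 = g2 (s0 + s * (1 - s0))" using ts(3) s0 unfolding h1_def h2_def by simp
        then have "s0 = s0 + s * (1 - s0)" using i2 s0(1) st unfolding inj_on_def by blast
        then have "s = 0" using s0l by simp
        then show ?thesis using t1 by simp
      qed
      define g where "g = (\<lambda>t. if t \<le> 1/2 then h1 (2 * t) else h2 (2 * t - 1))"
      have ag: "arc_in X g" unfolding g_def by (rule arc_join[OF ah1 ah2 e2 d])
      have img: "g ` {0..1} \<subseteq> h1 ` {0..1} \<union> h2 ` {0..1}"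
      proof
        fix y assume "y \<in> g ` {0..1}"
        then obtain t where t: "t \<in> {0..1}" "y = g t" by auto
        show "y \<in> h1 ` {0..1} \<union> h2 ` {0..1}"
        proof (cases "t \<le> 1/2")
          case True
          then have "y = h1 (2 * t)" "2 * t \<in> {0..1}" using t unfolding g_def by auto
          then show ?thesis by auto
        next
          case False
          then have "y = h2 (2 * t - 1)" "2 * t - 1 \<in> {0..1}" using t unfolding g_def by auto
          then show ?thesis by auto
        qed
      qed
      have "g 0 = g1 0" unfolding g_def h1_def by simp
      moreover have "g 1 = g2 1" unfolding g_def h2_def by simp
      ultimately show ?thesis using ag img im1 im2 by blast
    qed
  qed
qed

definition pedges :: "'a list \<Rightarrow> 'a set set" where
  "pedges P = {{P ! i, P ! Suc i} | i. Suc i < length P}"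

lemma sg_edge: "simple_graph V E \<Longrightarrow> e \<in> E \<Longrightarrow> \<exists>v w. v \<noteq> w \<and> e = {v, w} \<and> v \<in> V \<and> w \<in> V"
  unfolding simple_graph_def by blast

lemma sg_sub: "simple_graph V E \<Longrightarrow> e \<in> E \<Longrightarrow> e \<subseteq> V"
  using sg_edge by fastforce

lemma pedges_Cons:
  assumes "Q \<noteq> []"
  shows "pedges (u # Q) = insert {u, hd Q} (pedges Q)"
proof (rule set_eqI, rule iffI)
  fix a assume "a \<in> pedges (u # Q)"
  then obtain i where i: "a = {(u # Q) ! i, (u # Q) ! Suc i}" "Suc i < length (u # Q)"
    unfolding pedges_def by blast
  show "a \<in> insert {u, hd Q} (pedges Q)"
  proof (cases i)
    case 0
    then show ?thesis using i assms by (simp add: hd_conv_nth)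
  next
    case (Suc j)
    then show ?thesis using i unfolding pedges_def by auto
  qed
next
  fix a assume "a \<in> insert {u, hd Q} (pedges Q)"
  then show "a \<in> pedges (u # Q)"
  proof
    assume "a = {u, hd Q}"
    then have "a = {(u # Q) ! 0, (u # Q) ! Suc 0}" "Suc 0 < length (u # Q)" using assms
      by (auto simp: hd_conv_nth)
    then show ?thesis unfolding pedges_def by blast
  next
    assume "a \<in> pedges Q"
    then obtain i where i: "a = {Q ! i, Q ! Suc i}" "Suc i < length Q" unfolding pedges_def by blast
    then have "a = {(u # Q) ! Suc i, (u # Q) ! Suc (Suc i)}" "Suc (Suc i) < length (u # Q)" by auto
    then show ?thesis unfolding pedges_def by blast
  qed
qed

lemma is_path_Cons:
  assumes "is_path E (u # Q)" "Q \<noteq> []"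
  shows "is_path E Q" "{u, hd Q} \<in> E" "u \<notin> set Q"
proof -
  have d: "distinct (u # Q)" and st: "\<And>i. Suc i < length (u # Q) \<Longrightarrow> {(u # Q) ! i, (u # Q) ! Suc i} \<in> E"
    using assms(1) unfolding is_path_def by auto
  show "is_path E Q" unfolding is_path_def
  proof (intro conjI allI impI)
    show "Q \<noteq> []" by fact
    show "distinct Q" using d by simp
    fix i assume "Suc i < length Q"
    then show "{Q ! i, Q ! Suc i} \<in> E" using st[of "Suc i"] by simp
  qed
  show "{u, hd Q} \<in> E" using st[of 0] assms(2) by (simp add: hd_conv_nth)
  show "u \<notin> set Q" using d by simp
qed

lemma pedges_sub:
  assumes "is_path E P" "a \<in> pedges P"
  shows "a \<in> E" "a \<subseteq> set P"
  using assms unfolding pedges_def is_path_def by auto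

lemma pedges_card: "finite (pedges P) \<and> card (pedges P) \<le> length P - 1"
proof -
  have "pedges P = (\<lambda>i. {P ! i, P ! Suc i}) ` {..< length P - 1}"
    unfolding pedges_def by auto
  then show ?thesis by (metis card_image_le card_lessThan finite_imageI finite_lessThan)
qed

lemma set_internal:
  assumes "2 \<le> length P"
  shows "set P = insert (hd P) (insert (last P) (internal P))"
proof -
  obtain a Q where P: "P = a # Q" using assms by (cases P) auto
  then have Q: "Q \<noteq> []" using assms by auto
  have "set Q = insert (last Q) (set (butlast Q))"
    using Q by (metis append_butlast_last_id list.set(2) rotate1.simps(2) set_rotate1)
  then show ?thesis unfolding internal_def using P Q by auto
qed

lemma internal_sub: "internal P \<subseteq> set P"
  unfolding internal_def by (metis in_set_butlastD list.set_sel(2) subsetI tl_Nil empty_iff list.set(1))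

lemma path_in_V:
  assumes sg: "simple_graph V E" and p: "is_path E P" and l: "2 \<le> length P"
  shows "set P \<subseteq> V"
proof
  fix x assume "x \<in> set P"
  then obtain i where i: "i < length P" "x = P ! i" by (auto simp: in_set_conv_nth)
  show "x \<in> V"
  proof (cases "Suc i < length P")
    case True
    then have "{P ! i, P ! Suc i} \<in> E" using p unfolding is_path_def by auto
    then show ?thesis using sg_sub[OF sg] i by auto
  next
    case False
    then have "Suc (i - 1) < length P" "Suc (i - 1) = i" using i l by auto
    then have "{P ! (i - 1), P ! i} \<in> E" using p unfolding is_path_def by metis
    then show ?thesis using sg_sub[OF sg] i by auto
  qed
qed

lemma edge_arc:
  assumes dr: "drawing X V E pv ce" and sg: "simple_graph V E" and e: "{u, v} \<in> E" and uv: "u \<noteq> v"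
  shows "\<exists>g. arc_in X g \<and> g 0 = pv u \<and> g 1 = pv v \<and> g ` {0..1} = ce {u, v} ` {0..1}"
proof -
  have c: "continuous_map (top_of_set {0..1}) X (ce {u, v})" "inj_on (ce {u, v}) {0..1}"
    and ex: "\<exists>v' w'. {u, v} = {v', w'} \<and> ce {u, v} 0 = pv v' \<and> ce {u, v} 1 = pv w'"
    using dr e unfolding drawing_def by auto
  have a: "arc_in X (ce {u, v})" using c unfolding arc_in_def by simp
  obtain v' w' where vw: "{u, v} = {v', w'}" "ce {u, v} 0 = pv v'" "ce {u, v} 1 = pv w'" using ex by blast
  show ?thesis
  proof (cases "v' = u")
    case True
    then have "w' = v" using vw(1) uv by (metis doubleton_eq_iff)
    then show ?thesis using a vw True by blast
  next
    case False
    then have "v' = v" "w' = u" using vw(1) uv by (metis doubleton_eq_iff)+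
    moreover have "(\<lambda>t. ce {u, v} (1 - t)) ` {0..1} = ce {u, v} ` {0..1}"
    proof
      show "(\<lambda>t. ce {u, v} (1 - t)) ` {0..1} \<subseteq> ce {u, v} ` {0..1}" by auto
      show "ce {u, v} ` {0..1} \<subseteq> (\<lambda>t. ce {u, v} (1 - t)) ` {0..1}"
      proof
        fix y assume "y \<in> ce {u, v} ` {0..1}"
        then obtain t where "t \<in> {0..1::real}" "y = ce {u, v} t" by auto
        then have "1 - t \<in> {0..1}" "y = ce {u, v} (1 - (1 - t))" by auto
        then show "y \<in> (\<lambda>t. ce {u, v} (1 - t)) ` {0..1}" by blast
      qed
    qed
    ultimately show ?thesis using arc_reverse[OF a] vw
      by (intro exI[of _ "\<lambda>t. ce {u, v} (1 - t)"]) auto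
  qed
qed

lemma path_arc:
  assumes H: "Hausdorff_space X" and dr: "drawing X V E pv ce" and sg: "simple_graph V E"
  shows "is_path E P \<Longrightarrow> 2 \<le> length P \<Longrightarrow>
    \<exists>g. arc_in X g \<and> g 0 = pv (hd P) \<and> g 1 = pv (last P) \<and> g ` {0..1} \<subseteq> (\<Union>a\<in>pedges P. ce a ` {0..1})"
proof (induction P)
  case Nil
  then show ?case by simp
next
  case (Cons u Q)
  have Q: "Q \<noteq> []" using Cons.prems by auto
  note pc = is_path_Cons[OF Cons.prems(1) Q]
  have uQ: "u \<noteq> hd Q" using pc(3) Q by auto
  obtain g1 where g1: "arc_in X g1" "g1 0 = pv u" "g1 1 = pv (hd Q)" "g1 ` {0..1} = ce {u, hd Q} ` {0..1}"
    using edge_arc[OF dr sg pc(2) uQ] by blast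
  have pe: "pedges (u # Q) = insert {u, hd Q} (pedges Q)" using pedges_Cons[OF Q] .
  show ?case
  proof (cases "length Q = 1")
    case True
    then have "last (u # Q) = hd Q" using Q by (cases Q) auto
    then show ?thesis using g1 pe by (intro exI[of _ g1]) auto
  next
    case False
    have "length Q \<noteq> 0" using Q by simp
    then have l2: "2 \<le> length Q" using False by linarith
    obtain g2 where g2: "arc_in X g2" "g2 0 = pv (hd Q)" "g2 1 = pv (last Q)"
      "g2 ` {0..1} \<subseteq> (\<Union>a\<in>pedges Q. ce a ` {0..1})"
      using Cons.IH[OF pc(1) l2] by blast
    have V: "set (u # Q) \<subseteq> V" using path_in_V[OF sg Cons.prems] .
    have "last Q \<in> set Q" using Q by simp
    then have "u \<noteq> last Q" using pc(3) by auto
    moreover have "u \<in> V" "last Q \<in> V" using V Q by auto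
    moreover have "inj_on pv V" using dr unfolding drawing_def by auto
    ultimately have ne: "g1 0 \<noteq> g2 1" using g1 g2 by (metis inj_on_def)
    obtain g where g: "arc_in X g" "g 0 = g1 0" "g 1 = g2 1" "g ` {0..1} \<subseteq> g1 ` {0..1} \<union> g2 ` {0..1}"
      using arc_shortcut[OF H g1(1) g2(1) _ ne] g1 g2 by auto
    have "last (u # Q) = last Q" using Q by simp
    moreover have "g ` {0..1} \<subseteq> (\<Union>a\<in>pedges (u # Q). ce a ` {0..1})"
    proof
      fix y assume "y \<in> g ` {0..1}"
      then have "y \<in> g1 ` {0..1} \<or> y \<in> g2 ` {0..1}" using g(4) by blast
      then show "y \<in> (\<Union>a\<in>pedges (u # Q). ce a ` {0..1})"
      proof
        assume "y \<in> g1 ` {0..1}"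
        then have "y \<in> ce {u, hd Q} ` {0..1}" using g1(4) by simp
        moreover have "{u, hd Q} \<in> pedges (u # Q)" using pe by simp
        ultimately show ?thesis by blast
      next
        assume "y \<in> g2 ` {0..1}"
        then obtain a where "a \<in> pedges Q" "y \<in> ce a ` {0..1}" using g2(4) by blast
        moreover have "pedges Q \<subseteq> pedges (u # Q)" using pe by blast
        ultimately show ?thesis by blast
      qed
    qed
    ultimately show ?thesis using g g1 g2 by (intro exI[of _ g]) auto
  qed
qed

theorem corollary22:
  fixes g k r :: nat
    and VG :: "'a set" and EG :: "'a set set"
    and VH :: "'b set" and EH :: "'b set set"
  assumes "simple_graph VG EG"
    and "simple_graph VH EH"
    and "gap_cover_planar g k VG EG"
    and "shallow_top_minor r VH EH VG EG"
  shows "gap_cover_planar g ((2 * r + 1) * k) VH EH"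
proof -
  note sgG = assms(1) and sgH = assms(2)
  from assms(3) obtain c h pv ce where ch: "c + 2 * h \<le> g"
    and dG: "drawing (surface c h) VG EG pv ce" and gc: "gap_cover_drawing k VG EG ce"
    unfolding gap_cover_planar_def by blast
  obtain \<phi> :: "'b \<Rightarrow> 'a" and P :: "'b set \<Rightarrow> 'a list"
    where all: "inj_on \<phi> VH \<and> \<phi> ` VH \<subseteq> VG \<and>
        (\<forall>e\<in>EH. is_path EG (P e) \<and> length (P e) \<le> 2 * r + 2 \<and>
            (\<exists>x y. e = {x, y} \<and> hd (P e) = \<phi> x \<and> last (P e) = \<phi> y) \<and>
            internal (P e) \<inter> \<phi> ` VH = {}) \<and>
        (\<forall>e\<in>EH. \<forall>f\<in>EH. e \<noteq> f \<longrightarrow> internal (P e) \<inter> internal (P f) = {})"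
    using assms(4) unfolding shallow_top_minor_def by (elim exE) (erule that)
  have phi: "inj_on \<phi> VH" "\<phi> ` VH \<subseteq> VG" using all by auto
  have PE: "\<forall>e\<in>EH. is_path EG (P e) \<and> length (P e) \<le> 2 * r + 2 \<and>
            (\<exists>x y. e = {x, y} \<and> hd (P e) = \<phi> x \<and> last (P e) = \<phi> y) \<and>
            internal (P e) \<inter> \<phi> ` VH = {}" using all by blast
  have disj: "\<forall>e\<in>EH. \<forall>f\<in>EH. e \<noteq> f \<longrightarrow> internal (P e) \<inter> internal (P f) = {}"
    using all by blast
  let ?X = "surface c h"
  have Hs: "Hausdorff_space ?X" by (rule surface_hausdorff)
  have path: "is_path EG (P e)" and len: "length (P e) \<le> 2 * r + 2"
    and intphi: "internal (P e) \<inter> \<phi> ` VH = {}" if "e \<in> EH" for e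
    using PE that by auto
  have eVH: "e \<subseteq> VH" if "e \<in> EH" for e using sg_sub[OF sgH that] .
  have ends: "\<exists>x y. x \<noteq> y \<and> x \<in> VH \<and> y \<in> VH \<and> e = {x, y} \<and> hd (P e) = \<phi> x \<and> last (P e) = \<phi> y"
    if e: "e \<in> EH" for e
  proof -
    obtain x y where xy: "e = {x, y}" "hd (P e) = \<phi> x" "last (P e) = \<phi> y"
    proof -
      have "\<exists>x y. e = {x, y} \<and> hd (P e) = \<phi> x \<and> last (P e) = \<phi> y" using PE e by auto
      then show ?thesis using that by auto
    qed
    obtain v w where vw: "v \<noteq> w" "e = {v, w}" using sg_edge[OF sgH e] by blast
    have "x \<noteq> y" using xy(1) vw by (metis doubleton_eq_iff insert_absorb2)
    moreover have "x \<in> VH" "y \<in> VH" using eVH[OF e] xy(1) by auto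
    ultimately show ?thesis using xy by blast
  qed
  have len2: "2 \<le> length (P e)" if e: "e \<in> EH" for e
  proof -
    obtain x y where xy: "x \<noteq> y" "x \<in> VH" "y \<in> VH" "hd (P e) = \<phi> x" "last (P e) = \<phi> y"
      using ends[OF e] by blast
    have "hd (P e) \<noteq> last (P e)" using xy phi(1) by (metis inj_on_def)
    moreover have "P e \<noteq> []" using path[OF e] unfolding is_path_def by simp
    ultimately show ?thesis
      by (metis One_nat_def Suc_1 Suc_leI hd_conv_nth last_conv_nth le_neq_implies_less
          length_greater_0_conv diff_self_eq_0 less_Suc0 linorder_not_le)
  qed
  have hdlast: "\<phi> ` e = {hd (P e), last (P e)}" if e: "e \<in> EH" for e
    using ends[OF e] by auto
  have setP: "u \<in> internal (P e) \<or> u \<in> \<phi> ` e" if e: "e \<in> EH" and u: "u \<in> set (P e)" for e u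
    using set_internal[OF len2[OF e]] hdlast[OF e] u by auto
  have PV: "set (P e) \<subseteq> VG" if e: "e \<in> EH" for e using path_in_V[OF sgG path[OF e] len2[OF e]] .
  have idisj: "e = f" if "e \<in> EH" "f \<in> EH" "u \<in> internal (P e)" "u \<in> internal (P f)" for e f u
    using disj that by blast
  have common: "u \<in> \<phi> ` e \<and> u \<in> \<phi> ` f"
    if ef: "e \<in> EH" "f \<in> EH" "e \<noteq> f" and u: "u \<in> set (P e)" "u \<in> set (P f)" for e f u
  proof -
    have "u \<notin> internal (P e)"
    proof
      assume ui: "u \<in> internal (P e)"
      then have "u \<notin> \<phi> ` VH" using intphi[OF ef(1)] by auto
      then have "u \<notin> \<phi> ` f" using eVH[OF ef(2)] by auto
      then have "u \<in> internal (P f)" using setP[OF ef(2) u(2)] by auto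
      then show False using idisj[OF ef(1,2) ui] ef(3) by simp
    qed
    moreover have "u \<notin> internal (P f)"
    proof
      assume ui: "u \<in> internal (P f)"
      then have "u \<notin> \<phi> ` VH" using intphi[OF ef(2)] by auto
      then have "u \<notin> \<phi> ` e" using eVH[OF ef(1)] by auto
      then have "u \<in> internal (P e)" using setP[OF ef(1) u(1)] by auto
      then show False using idisj[OF ef(1,2) _ ui] ef(3) by simp
    qed
    ultimately show ?thesis using setP[OF ef(1) u(1)] setP[OF ef(2) u(2)] by auto
  qed
  have shared: "e = f" if ef: "e \<in> EH" "f \<in> EH" and a: "a \<in> pedges (P e)" "a \<in> pedges (P f)" for e f a
  proof (rule ccontr)
    assume nef: "e \<noteq> f"
    have aE: "a \<in> EG" using pedges_sub(1)[OF path[OF ef(1)] a(1)] .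
    obtain v w where vw: "v \<noteq> w" "a = {v, w}" using sg_edge[OF sgG aE] by blast
    have s1: "a \<subseteq> set (P e)" using pedges_sub(2)[OF path[OF ef(1)] a(1)] .
    have s2: "a \<subseteq> set (P f)" using pedges_sub(2)[OF path[OF ef(2)] a(2)] .
    have "v \<in> \<phi> ` e" "w \<in> \<phi> ` e" "v \<in> \<phi> ` f" "w \<in> \<phi> ` f"
      using common[OF ef nef] s1 s2 vw by auto
    have ee: "\<phi> ` e = {v, w}"
    proof -
      obtain x y where "e = {x, y}" using ends[OF ef(1)] by blast
      then show ?thesis using \<open>v \<in> \<phi> ` e\<close> \<open>w \<in> \<phi> ` e\<close> vw(1) by auto
    qed
    have ff: "\<phi> ` f = {v, w}"
    proof -
      obtain x y where "f = {x, y}" using ends[OF ef(2)] by blast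
      then show ?thesis using \<open>v \<in> \<phi> ` f\<close> \<open>w \<in> \<phi> ` f\<close> vw(1) by auto
    qed
    have "e = f" using ee ff inj_on_image_eq_iff[OF phi(1) eVH[OF ef(1)] eVH[OF ef(2)]] by simp
    then show False using nef by simp
  qed
  have dGall: "pv ` VG \<subseteq> topspace ?X \<and> inj_on pv VG \<and>
     (\<forall>e\<in>EG. continuous_map (top_of_set {0..1}) ?X (ce e) \<and> inj_on (ce e) {0..1} \<and>
        (\<exists>v w. e = {v, w} \<and> ce e 0 = pv v \<and> ce e 1 = pv w)) \<and>
     (\<forall>e\<in>EG. \<forall>t\<in>{0<..<1}. ce e t \<notin> pv ` VG) \<and>
     (\<forall>p. \<not> (\<exists>e1\<in>EG. \<exists>e2\<in>EG. \<exists>e3\<in>EG. e1 \<noteq> e2 \<and> e1 \<noteq> e3 \<and> e2 \<noteq> e3 \<and>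
            p \<in> ce e1 ` {0<..<1} \<and> p \<in> ce e2 ` {0<..<1} \<and> p \<in> ce e3 ` {0<..<1}))"
    using dG unfolding drawing_def .
  note dG1 = conjunct1[OF dGall] conjunct1[OF conjunct2[OF dGall]]
  note dGE = conjunct1[OF conjunct2[OF conjunct2[OF dGall]]]
  note dGI = conjunct1[OF conjunct2[OF conjunct2[OF conjunct2[OF dGall]]]]
  note dG3' = conjunct2[OF conjunct2[OF conjunct2[OF conjunct2[OF dGall]]]]
  have dGe: "continuous_map (top_of_set {0..1}) ?X (ce a) \<and> inj_on (ce a) {0..1} \<and>
        (\<exists>v w. a = {v, w} \<and> ce a 0 = pv v \<and> ce a 1 = pv w)" if "a \<in> EG" for a
    using bspec[OF dGE that] .
  have dGint: "ce a t \<notin> pv ` VG" if "a \<in> EG" "t \<in> {0<..<1}" for a t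
    using bspec[OF bspec[OF dGI that(1)] that(2)] .
  have dG3: False if "a1 \<in> EG" "a2 \<in> EG" "a3 \<in> EG" "a1 \<noteq> a2" "a1 \<noteq> a3" "a2 \<noteq> a3"
    "p \<in> ce a1 ` {0<..<1}" "p \<in> ce a2 ` {0<..<1}" "p \<in> ce a3 ` {0<..<1}" for p a1 a2 a3
    using spec[OF dG3', of p] that by blast
  define ceH where "ceH e = (SOME \<gamma>. arc_in ?X \<gamma> \<and> \<gamma> 0 = pv (hd (P e)) \<and> \<gamma> 1 = pv (last (P e)) \<and>
      \<gamma> ` {0..1} \<subseteq> (\<Union>a\<in>pedges (P e). ce a ` {0..1}))" for e
  have ceH: "arc_in ?X (ceH e) \<and> ceH e 0 = pv (hd (P e)) \<and> ceH e 1 = pv (last (P e)) \<and>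
      ceH e ` {0..1} \<subseteq> (\<Union>a\<in>pedges (P e). ce a ` {0..1})" if e: "e \<in> EH" for e
    unfolding ceH_def by (rule someI_ex[OF path_arc[OF Hs dG sgG path[OF e] len2[OF e]]])
  define pvH where "pvH = (\<lambda>z. pv (\<phi> z))"
  have interior: "(\<exists>a\<in>pedges (P e). \<exists>\<tau>\<in>{0<..<1}. ceH e t = ce a \<tau>) \<or> (\<exists>u\<in>internal (P e). ceH e t = pv u)"
    if e: "e \<in> EH" and t: "t \<in> {0<..<1}" for e t
  proof -
    have "ceH e t \<in> ceH e ` {0..1}" using t by auto
    then have "ceH e t \<in> (\<Union>a\<in>pedges (P e). ce a ` {0..1})" using ceH[OF e] by blast
    then obtain a \<tau> where a: "a \<in> pedges (P e)" "\<tau> \<in> {0..1}" "ceH e t = ce a \<tau>" by auto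
    show ?thesis
    proof (cases "\<tau> \<in> {0<..<1}")
      case True
      then show ?thesis using a by blast
    next
      case False
      then have \<tau>01: "\<tau> = 0 \<or> \<tau> = 1" using a(2) by auto
      have aE: "a \<in> EG" using pedges_sub(1)[OF path[OF e] a(1)] .
      obtain v w where vw: "a = {v, w}" "ce a 0 = pv v" "ce a 1 = pv w" using dGe[OF aE] by blast
      obtain u where u: "u \<in> a" "ceH e t = pv u" using \<tau>01 vw a(3) by auto
      have uP: "u \<in> set (P e)" using pedges_sub(2)[OF path[OF e] a(1)] u(1) by auto
      show ?thesis
      proof (cases "u \<in> internal (P e)")
        case True
        then show ?thesis using u by blast
      next
        case False
        then have "u \<in> {hd (P e), last (P e)}" using setP[OF e uP] hdlast[OF e] by auto
        then have "ceH e t = ceH e 0 \<or> ceH e t = ceH e 1" using ceH[OF e] u(2) by auto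
        moreover have "inj_on (ceH e) {0..1}" using ceH[OF e] unfolding arc_in_def by auto
        ultimately have "t = 0 \<or> t = 1"
        proof (elim disjE)
          assume "ceH e t = ceH e 0" "inj_on (ceH e) {0..1}"
          then show ?thesis using t by (auto dest: inj_onD)
        next
          assume "ceH e t = ceH e 1" "inj_on (ceH e) {0..1}"
          then show ?thesis using t by (auto dest: inj_onD)
        qed
        then show ?thesis using t by auto
      qed
    qed
  qed
  have pairB: False if ef: "e \<in> EH" "f \<in> EH" "e \<noteq> f" and t: "t \<in> {0<..<1}" and s: "s \<in> {0<..<1}"
    and eq: "ceH e t = ceH f s" and u: "u \<in> internal (P e)" "ceH e t = pv u" for e f t s u
  proof -
    have uV: "u \<in> VG" using subsetD[OF internal_sub u(1)] PV[OF ef(1)] by auto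
    from interior[OF ef(2) s] show False
    proof
      assume "\<exists>b\<in>pedges (P f). \<exists>\<tau>\<in>{0<..<1}. ceH f s = ce b \<tau>"
      then obtain b \<tau> where b: "b \<in> pedges (P f)" "\<tau> \<in> {0<..<1}" "ceH f s = ce b \<tau>" by blast
      have "b \<in> EG" using pedges_sub(1)[OF path[OF ef(2)] b(1)] .
      then show False using dGint[OF _ b(2)] b(3) eq u(2) uV by auto
    next
      assume "\<exists>u'\<in>internal (P f). ceH f s = pv u'"
      then obtain u' where u': "u' \<in> internal (P f)" "ceH f s = pv u'" by blast
      have u'V: "u' \<in> VG" using subsetD[OF internal_sub u'(1)] PV[OF ef(2)] by auto
      have "u = u'" using dG1(2) uV u'V u(2) u'(2) eq unfolding inj_on_def by auto
      then show False using idisj[OF ef(1,2) u(1)] u'(1) ef(3) by auto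
    qed
  qed
  have threeA: "\<exists>a\<in>pedges (P e). \<exists>\<tau>\<in>{0<..<1}. ceH e t = ce a \<tau>"
    if ef: "e \<in> EH" "f \<in> EH" "e \<noteq> f" and t: "t \<in> {0<..<1}" and s: "s \<in> {0<..<1}"
    and eq: "ceH e t = ceH f s" for e f t s
    using interior[OF ef(1) t] pairB[OF ef t s eq] by blast
  have drH: "drawing ?X VH EH pvH ceH"
    unfolding drawing_def
  proof (intro conjI ballI allI)
    show "pvH ` VH \<subseteq> topspace ?X" using dG1(1) phi(2) unfolding pvH_def by auto
    show "inj_on pvH VH" unfolding pvH_def
      using comp_inj_on[OF phi(1) inj_on_subset[OF dG1(2) phi(2)]] by (simp add: o_def)
  next
    fix e assume e: "e \<in> EH"
    show "continuous_map (top_of_set {0..1}) ?X (ceH e)" "inj_on (ceH e) {0..1}"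
      using ceH[OF e] unfolding arc_in_def by auto
    obtain x y where xy: "e = {x, y}" "hd (P e) = \<phi> x" "last (P e) = \<phi> y"
      using ends[OF e] by (elim exE conjE) (rule that; assumption)
    show "\<exists>v w. e = {v, w} \<and> ceH e 0 = pvH v \<and> ceH e 1 = pvH w"
      using xy ceH[OF e] unfolding pvH_def by (intro exI[of _ x] exI[of _ y]) auto
  next
    fix e and t :: real assume e: "e \<in> EH" and t: "t \<in> {0<..<1}"
    show "ceH e t \<notin> pvH ` VH"
    proof
      assume "ceH e t \<in> pvH ` VH"
      then obtain z where z: "z \<in> VH" "ceH e t = pv (\<phi> z)" unfolding pvH_def by auto
      have zV: "\<phi> z \<in> VG" using phi(2) z(1) by auto
      from interior[OF e t] show False
      proof
        assume "\<exists>a\<in>pedges (P e). \<exists>\<tau>\<in>{0<..<1}. ceH e t = ce a \<tau>"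
        then obtain a \<tau> where a: "a \<in> pedges (P e)" "\<tau> \<in> {0<..<1}" "ceH e t = ce a \<tau>" by blast
        have "a \<in> EG" using pedges_sub(1)[OF path[OF e] a(1)] .
        then show False using dGint[OF _ a(2)] a(3) z(2) zV by auto
      next
        assume "\<exists>u\<in>internal (P e). ceH e t = pv u"
        then obtain u where u: "u \<in> internal (P e)" "ceH e t = pv u" by blast
        have uV: "u \<in> VG" using subsetD[OF internal_sub u(1)] PV[OF e] by auto
        have "u = \<phi> z" using dG1(2) uV zV u(2) z(2) unfolding inj_on_def by auto
        then show False using intphi[OF e] u(1) z(1) by auto
      qed
    qed
  next
    fix p
    show "\<not> (\<exists>e1\<in>EH. \<exists>e2\<in>EH. \<exists>e3\<in>EH. e1 \<noteq> e2 \<and> e1 \<noteq> e3 \<and> e2 \<noteq> e3 \<and>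
            p \<in> ceH e1 ` {0<..<1} \<and> p \<in> ceH e2 ` {0<..<1} \<and> p \<in> ceH e3 ` {0<..<1})"
    proof
      assume "\<exists>e1\<in>EH. \<exists>e2\<in>EH. \<exists>e3\<in>EH. e1 \<noteq> e2 \<and> e1 \<noteq> e3 \<and> e2 \<noteq> e3 \<and>
            p \<in> ceH e1 ` {0<..<1} \<and> p \<in> ceH e2 ` {0<..<1} \<and> p \<in> ceH e3 ` {0<..<1}"
      then obtain e1 e2 e3 t1 t2 t3 where E: "e1 \<in> EH" "e2 \<in> EH" "e3 \<in> EH" "e1 \<noteq> e2" "e1 \<noteq> e3" "e2 \<noteq> e3"
        and T: "t1 \<in> {0<..<1}" "t2 \<in> {0<..<1}" "t3 \<in> {0<..<1}"
        and pe: "p = ceH e1 t1" "p = ceH e2 t2" "p = ceH e3 t3"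
        by blast
      obtain a1 \<tau>1 where a1: "a1 \<in> pedges (P e1)" "\<tau>1 \<in> {0<..<1}" "p = ce a1 \<tau>1"
        using threeA[OF E(1) E(2) E(4) T(1) T(2)] pe by metis
      obtain a2 \<tau>2 where a2: "a2 \<in> pedges (P e2)" "\<tau>2 \<in> {0<..<1}" "p = ce a2 \<tau>2"
        using threeA[OF E(2) E(1) E(4)[symmetric] T(2) T(1)] pe by metis
      obtain a3 \<tau>3 where a3: "a3 \<in> pedges (P e3)" "\<tau>3 \<in> {0<..<1}" "p = ce a3 \<tau>3"
        using threeA[OF E(3) E(1) E(5)[symmetric] T(3) T(1)] pe by metis
      have "a1 \<noteq> a2" using shared[OF E(1) E(2) a1(1)] a2(1) E(4) by auto
      moreover have "a1 \<noteq> a3" using shared[OF E(1) E(3) a1(1)] a3(1) E(5) by auto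
      moreover have "a2 \<noteq> a3" using shared[OF E(2) E(3) a2(1)] a3(1) E(6) by auto
      moreover have "a1 \<in> EG" "a2 \<in> EG" "a3 \<in> EG"
        using pedges_sub(1)[OF path[OF E(1)] a1(1)] pedges_sub(1)[OF path[OF E(2)] a2(1)]
          pedges_sub(1)[OF path[OF E(3)] a3(1)] by auto
      ultimately show False using dG3 a1 a2 a3 by blast
    qed
  qed
  have cross: "\<exists>a\<in>pedges (P e). \<exists>b\<in>pedges (P f). {a, b} \<in> crossing_pairs EG ce"
    if ef: "e \<in> EH" "f \<in> EH" and ind: "independent_edges e f"
      and int: "ceH e ` {0..1} \<inter> ceH f ` {0..1} \<noteq> {}" for e f
  proof -
    obtain p where p: "p \<in> ceH e ` {0..1}" "p \<in> ceH f ` {0..1}" using int by blast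
    obtain a where a: "a \<in> pedges (P e)" "p \<in> ce a ` {0..1}" using p(1) ceH[OF ef(1)] by blast
    obtain b where b: "b \<in> pedges (P f)" "p \<in> ce b ` {0..1}" using p(2) ceH[OF ef(2)] by blast
    have ne: "e \<noteq> f"
    proof
      assume "e = f"
      then have "e = {}" using ind unfolding independent_edges_def by simp
      then show False using ends[OF ef(1)] by auto
    qed
    have ab: "a \<inter> b = {}"
    proof (rule ccontr)
      assume "a \<inter> b \<noteq> {}"
      then obtain u where u: "u \<in> a" "u \<in> b" by blast
      have "u \<in> set (P e)" "u \<in> set (P f)"
        using pedges_sub(2)[OF path[OF ef(1)] a(1)] pedges_sub(2)[OF path[OF ef(2)] b(1)] u by auto
      then have "u \<in> \<phi> ` e" "u \<in> \<phi> ` f" using common[OF ef ne] by auto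
      then obtain z1 z2 where z: "z1 \<in> e" "z2 \<in> f" "\<phi> z1 = \<phi> z2" by auto
      then have "z1 = z2" using phi(1) eVH[OF ef(1)] eVH[OF ef(2)] unfolding inj_on_def by blast
      then show False using z ind unfolding independent_edges_def by blast
    qed
    have "a \<in> EG" "b \<in> EG"
      using pedges_sub(1)[OF path[OF ef(1)] a(1)] pedges_sub(1)[OF path[OF ef(2)] b(1)] by auto
    then have "{a, b} \<in> crossing_pairs EG ce"
      unfolding crossing_pairs_def independent_edges_def using ab a(2) b(2) by blast
    then show ?thesis using a(1) b(1) by blast
  qed
  obtain BG where BG: "bearing EG ce BG"
    and covG: "\<And>a. a \<in> EG \<Longrightarrow> \<exists>C. C \<subseteq> VG - a \<and> card C \<le> k \<and> B_cover BG a C"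
    using gc unfolding gap_cover_drawing_def by blast
  define BH where "BH = {(e, f). {e, f} \<in> crossing_pairs EH ceH \<and>
      (\<exists>a\<in>pedges (P e). \<exists>b\<in>pedges (P f). (a, b) \<in> BG)}"
  have cpH: "\<exists>e' f'. {e, f} = {e', f'} \<and> e' \<in> EH \<and> f' \<in> EH \<and> independent_edges e' f' \<and>
      ceH e' ` {0..1} \<inter> ceH f' ` {0..1} \<noteq> {}" if "{e, f} \<in> crossing_pairs EH ceH" for e f
    using that unfolding crossing_pairs_def by blast
  have bearH: "bearing EH ceH BH"
    unfolding bearing_def
  proof (intro conjI allI impI)
    show "\<forall>(e, f)\<in>BH. {e, f} \<in> crossing_pairs EH ceH" unfolding BH_def by auto
  next
    fix e f assume ef: "{e, f} \<in> crossing_pairs EH ceH"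
    obtain e' f' where ef': "{e, f} = {e', f'}" "e' \<in> EH" "f' \<in> EH" "independent_edges e' f'"
      "ceH e' ` {0..1} \<inter> ceH f' ` {0..1} \<noteq> {}" using cpH[OF ef] by (elim exE conjE) (rule that; assumption)
    obtain a b where ab: "a \<in> pedges (P e')" "b \<in> pedges (P f')" "{a, b} \<in> crossing_pairs EG ce"
      using cross[OF ef'(2,3,4,5)] by blast
    have "(a, b) \<in> BG \<or> (b, a) \<in> BG" using BG ab(3) unfolding bearing_def by blast
    moreover have "{f', e'} \<in> crossing_pairs EH ceH" using ef ef'(1) by (simp add: insert_commute)
    moreover have "{e', f'} \<in> crossing_pairs EH ceH" using ef ef'(1) by simp
    ultimately have "(e', f') \<in> BH \<or> (f', e') \<in> BH" unfolding BH_def using ab by blast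
    then show "(e, f) \<in> BH \<or> (f, e) \<in> BH" using ef'(1) by (metis doubleton_eq_iff)
  qed
  define CG where "CG a = (SOME C. C \<subseteq> VG - a \<and> card C \<le> k \<and> B_cover BG a C)" for a
  have CG: "CG a \<subseteq> VG - a \<and> card (CG a) \<le> k \<and> B_cover BG a (CG a)" if "a \<in> EG" for a
    unfolding CG_def by (rule someI_ex[OF covG[OF that]])
  have finVG: "finite VG" using sgG unfolding simple_graph_def by simp
  define \<rho> where "\<rho> u = (SOME z. z \<in> VH \<and> (u = \<phi> z \<or> (\<exists>f\<in>EH. u \<in> internal (P f) \<and> z \<in> f)))" for u
  have rho: "\<rho> u \<in> f" if f: "f \<in> EH" and u: "u \<in> set (P f)" for f u
  proof -
    let ?Q = "\<lambda>z. z \<in> VH \<and> (u = \<phi> z \<or> (\<exists>f\<in>EH. u \<in> internal (P f) \<and> z \<in> f))"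
    show ?thesis
    proof (cases "u \<in> internal (P f)")
      case True
      obtain z0 where "z0 \<in> f" using ends[OF f] by blast
      then have "?Q z0" using True f eVH[OF f] by blast
      moreover have "z \<in> f" if Qz: "?Q z" for z
      proof -
        have "u \<noteq> \<phi> z" using True intphi[OF f] Qz by blast
        then obtain f' where "f' \<in> EH" "u \<in> internal (P f')" "z \<in> f'" using Qz by blast
        then show ?thesis using idisj[OF f _ True] by blast
      qed
      ultimately show ?thesis unfolding \<rho>_def by (rule someI2)
    next
      case False
      then obtain z0 where z0: "z0 \<in> f" "u = \<phi> z0" using setP[OF f u] by blast
      then have "?Q z0" using eVH[OF f] by blast
      moreover have "z \<in> f" if Qz: "?Q z" for z
      proof -
        have "u \<in> \<phi> ` VH" using z0 eVH[OF f] by blast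
        then have "\<not> (\<exists>f\<in>EH. u \<in> internal (P f))" using intphi by blast
        then have "u = \<phi> z" using Qz by blast
        then have "z = z0" using phi(1) z0 eVH[OF f] Qz unfolding inj_on_def by blast
        then show ?thesis using z0 by simp
      qed
      ultimately show ?thesis unfolding \<rho>_def by (rule someI2)
    qed
  qed
  have coverH: "\<exists>C. C \<subseteq> VH - e \<and> card C \<le> (2 * r + 1) * k \<and> B_cover BH e C" if e: "e \<in> EH" for e
  proof -
    define U where "U = (\<Union>a\<in>pedges (P e). CG a)"
    define C where "C = (\<rho> ` U) \<inter> VH - e"
    have pE: "a \<in> EG" if "a \<in> pedges (P e)" for a using pedges_sub(1)[OF path[OF e] that] .
    have finP: "finite (pedges (P e))" and cardP: "card (pedges (P e)) \<le> 2 * r + 1"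
      using pedges_card[of "P e"] len[OF e] by auto
    have finU: "finite U" unfolding U_def using finP CG pE finVG by (auto intro: finite_subset)
    have "card C \<le> card (\<rho> ` U)" unfolding C_def using finU by (intro card_mono) auto
    also have "\<dots> \<le> card U" using card_image_le[OF finU] .
    also have "\<dots> \<le> (\<Sum>a\<in>pedges (P e). card (CG a))" unfolding U_def by (rule card_UN_le[OF finP])
    also have "\<dots> \<le> (\<Sum>a\<in>pedges (P e). k)" using CG pE by (intro sum_mono) auto
    also have "\<dots> = card (pedges (P e)) * k" by simp
    also have "\<dots> \<le> (2 * r + 1) * k" using cardP by (intro mult_right_mono) auto
    finally have cC: "card C \<le> (2 * r + 1) * k" .
    have "B_cover BH e C" unfolding B_cover_def
    proof (intro allI impI)
      fix f assume "(e, f) \<in> BH"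
      then have ef: "{e, f} \<in> crossing_pairs EH ceH" and
        ab: "\<exists>a\<in>pedges (P e). \<exists>b\<in>pedges (P f). (a, b) \<in> BG" unfolding BH_def by auto
      obtain a b where ab: "a \<in> pedges (P e)" "b \<in> pedges (P f)" "(a, b) \<in> BG" using ab by blast
      obtain e' f' where ef': "{e, f} = {e', f'}" "e' \<in> EH" "f' \<in> EH" "independent_edges e' f'"
        using cpH[OF ef] by (elim exE conjE) (rule that; assumption)
      have fE: "f \<in> EH" using ef'(1-3) by (metis doubleton_eq_iff)
      have indep: "e \<inter> f = {}" using ef'(1,4) unfolding independent_edges_def
        by (metis Int_commute doubleton_eq_iff)
      have "B_cover BG a (CG a)" using CG[OF pE[OF ab(1)]] by simp
      then have "b \<inter> CG a \<noteq> {}" using ab(3) unfolding B_cover_def by blast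
      then obtain u where u: "u \<in> b" "u \<in> CG a" by blast
      have uf: "u \<in> set (P f)" using pedges_sub(2)[OF path[OF fE] ab(2)] u(1) by auto
      have "\<rho> u \<in> f" using rho[OF fE uf] .
      moreover have "u \<in> U" unfolding U_def using ab(1) u(2) by blast
      moreover have "\<rho> u \<in> VH" using \<open>\<rho> u \<in> f\<close> eVH[OF fE] by auto
      moreover have "\<rho> u \<notin> e" using \<open>\<rho> u \<in> f\<close> indep by auto
      ultimately show "f \<inter> C \<noteq> {}" unfolding C_def by blast
    qed
    moreover have "C \<subseteq> VH - e" unfolding C_def by auto
    ultimately show ?thesis using cC by blast
  qed
  have "gap_cover_drawing ((2 * r + 1) * k) VH EH ceH"
    unfolding gap_cover_drawing_def using bearH coverH by blast
  then show ?thesis unfolding gap_cover_planar_def using ch drH by blast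
qed

end
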